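(* Let $K$ be a nonempty compact subset of $\mathbb R^d$, let $n\ge1$ and $q\le0$. There exists $\nu_n\in\mathcal P(K)$ with finite support such that for every finitely supported $\mu=\sum_{i=1}^Np_i\delta_{x_i}\in\mathcal P(K)$ (with $p_i>0$) and every $\theta\in(0,1)$, the measure $\nu=(1-\theta)\mu+\theta\nu_n$ satisfies $$I_\nu(3\cdot2^{-n},q)\le N(1-\theta)^qa^q+\theta^q+\frac{\theta^q}{2^q}C_n(K)^{1-q},$$ where $a=\min_ip_i$. Moreover $\nu(B(x,3\cdot2^{-n}))>0$ for every $x\in K$.
   Context: $\mathcal P(K)$ is the set of Borel probability measures on $K$. Balls $B(x,r)$ are taken with respect to the $\ell^\infty$ norm on $\mathbb R^d$, and $I_\nu(r,q)=\int_K\nu(B(x,r))^{q-1}d\nu(x)$. $C_n(K)$ is the number of connected components of the union of the half-closed dyadic cubes $\prod_{j=1}^d[k_j2^{-n},(k_j+1)2^{-n})$, $k_j\in\mathbb Z$, that meet $K$. *)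

theory Defs
  imports "HOL-Analysis.Analysis" "HOL-Probability.Probability"
begin

definition linf_ball :: "real^'d \<Rightarrow> real \<Rightarrow> (real^'d) set" where
  "linf_ball x r = {y. \<forall>j. \<bar>y $ j - x $ j\<bar> \<le> r}"

definition I_nu :: "(real^'d) pmf \<Rightarrow> real \<Rightarrow> real \<Rightarrow> real" where
  "I_nu \<nu> r q = measure_pmf.expectation \<nu> (\<lambda>x. (measure_pmf.prob \<nu> (linf_ball x r)) powr (q - 1))"

definition dyadic_cube :: "nat \<Rightarrow> int^'d \<Rightarrow> (real^'d) set" where
  "dyadic_cube n k = {y. \<forall>j. of_int (k $ j) / 2 ^ n \<le> y $ j \<and> y $ j < (of_int (k $ j) + 1) / 2 ^ n}"

definition C_n :: "nat \<Rightarrow> (real^'d) set \<Rightarrow> nat" where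
  "C_n n K = card (components (\<Union> {dyadic_cube n k | k. dyadic_cube n k \<inter> K \<noteq> {}}))"

definition mixture :: "real \<Rightarrow> 'a pmf \<Rightarrow> 'a pmf \<Rightarrow> 'a pmf" where
  "mixture \<theta> p q = bind_pmf (bernoulli_pmf \<theta>) (\<lambda>b. if b then q else p)"

end

theory Submission
  imports Defs
begin


lemma finite_pmf_exists:
  fixes f :: "'a \<Rightarrow> real"
  assumes "finite I" "\<And>k. k \<in> I \<Longrightarrow> 0 < f k" "sum f I = 1"
  shows "\<exists>\<rho>. \<forall>k. pmf \<rho> k = (if k \<in> I then f k else 0)"
proof -
  define g where "g k = (if k \<in> I then f k else 0)" for k
  have nn: "\<And>k. 0 \<le> g k" using assms(2) by (simp add: g_def less_imp_le)
  have "(\<integral>\<^sup>+x. ennreal (g x) \<partial>count_space UNIV) = (\<Sum>x\<in>I. ennreal (g x))"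
    by (rule nn_integral_count_space') (auto simp: g_def assms(1))
  also have "\<dots> = ennreal (sum g I)" using nn by simp
  also have "sum g I = 1" using assms(3) by (simp add: g_def)
  finally have "(\<integral>\<^sup>+x. ennreal (g x) \<partial>count_space UNIV) = 1" by simp
  then show ?thesis using pmf_embed_pmf[of g] nn unfolding g_def by blast
qed

primrec cw :: "real \<Rightarrow> real \<Rightarrow> real \<Rightarrow> nat \<Rightarrow> real" where
  "cw c0 e D 0 = c0" | "cw c0 e D (Suc i) = cw c0 e D i powr e / D"

lemma cw_props:
  assumes "0 < c0" "c0 \<le> 1" "1 \<le> e" "1 \<le> D"
  shows "0 < cw c0 e D i \<and> cw c0 e D i \<le> 1 \<and> cw c0 e D (Suc i) \<le> cw c0 e D i \<and> cw c0 e D (Suc i) \<le> 1 / D"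
proof (induction i)
  case 0
  have a: "c0 powr e \<le> c0 powr 1" by (rule powr_mono') (use assms in auto)
  have b: "c0 powr e \<le> 1" by (rule powr_le1) (use assms in auto)
  have "c0 powr e / D \<le> c0 powr e"
    using mult_left_mono[of 1 D "c0 powr e"] assms by (simp add: pos_divide_le_eq)
  hence "c0 powr e / D \<le> c0" using a assms by simp
  moreover have "c0 powr e / D \<le> 1 / D" using b assms by (simp add: divide_right_mono)
  ultimately show ?case using assms by simp
next
  case (Suc i)
  let ?c = "cw c0 e D (Suc i)"
  have q1: "?c \<le> cw c0 e D i" "cw c0 e D i \<le> 1" "0 < cw c0 e D i" using Suc.IH by blast+
  have p: "0 < ?c" "?c \<le> 1" using q1(3) assms apply simp using q1(1,2) by linarith
  have a: "?c powr e \<le> ?c powr 1" by (rule powr_mono') (use assms p in auto)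
  have b: "?c powr e \<le> 1" by (rule powr_le1) (use assms p in auto)
  have "?c powr e / D \<le> ?c powr e"
    using mult_left_mono[of 1 D "?c powr e"] assms by (simp add: pos_divide_le_eq)
  hence "?c powr e / D \<le> ?c" using a p by simp
  moreover have "?c powr e / D \<le> 1 / D" using b assms by (simp add: divide_right_mono)
  ultimately show ?case using p by simp
qed

lemma weights:
  fixes I R :: "'a set" and adj :: "'a \<Rightarrow> 'a \<Rightarrow> bool" and q :: real
  assumes fin: "finite I" and RI: "R \<subseteq> I" and Rne: "R \<noteq> {}"
    and refl: "\<And>k. adj k k" and sym: "\<And>a b. adj a b \<Longrightarrow> adj b a"
    and reach: "\<And>k. k \<in> I \<Longrightarrow> \<exists>r\<in>R. (\<lambda>a b. a \<in> I \<and> b \<in> I \<and> adj a b)\<^sup>*\<^sup>* r k"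
    and q: "q \<le> 0"
  shows "\<exists>\<rho>. set_pmf \<rho> = I \<and> (\<Sum>k\<in>I. pmf \<rho> k * (measure_pmf.prob \<rho> {k'\<in>I. adj k k'}) powr (q-1))
            \<le> 1 + 2 powr (-q) * real (card R) powr (1-q)"
proof -
  define E where "E = (\<lambda>a b. a \<in> I \<and> b \<in> I \<and> adj a b)"
  define D where "D = 2 * real (card I)"
  define c0 where "c0 = 1 / (2 * real (card R))"
  define c where "c = cw c0 (1-q) D"
  have finR: "finite R" using finite_subset[OF RI fin] .
  have cardR: "card R \<ge> 1" using Rne finR by (simp add: Suc_le_eq card_gt_0_iff)
  have cardI: "card R \<le> card I" using card_mono[OF fin RI] .
  have D1: "1 \<le> D" using cardR cardI by (simp add: D_def)
  have c0p: "0 < c0" "c0 \<le> 1" using cardR by (auto simp: c0_def)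
  have cp: "\<And>i. 0 < c i \<and> c i \<le> 1 \<and> c (Suc i) \<le> c i \<and> c (Suc i) \<le> 1/D"
    unfolding c_def by (rule cw_props) (use c0p D1 q in auto)
  have cmono: "\<And>i j. i \<le> j \<Longrightarrow> c j \<le> c i"
    by (rule lift_Suc_antimono_le[of c]) (use cp in auto)
  have c0eq: "c 0 = c0" by (simp add: c_def)
  have cSuc: "\<And>i. c (Suc i) = c i powr (1-q) / D" by (simp add: c_def)
  define d where "d k = (LEAST i. \<exists>r\<in>R. (E ^^ i) r k)" for k
  have dex: "\<exists>r\<in>R. (E ^^ d k) r k" if kI: "k \<in> I" for k
  proof -
    obtain r where r: "r \<in> R" "E\<^sup>*\<^sup>* r k" using reach[OF kI] unfolding E_def by blast
    then obtain n where "(E ^^ n) r k" using rtranclp_power[of E r k] by blast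
    then have "\<exists>i. \<exists>r\<in>R. (E ^^ i) r k" using r(1) by blast
    then show ?thesis unfolding d_def by (rule LeastI_ex)
  qed
  have dle: "d k \<le> i" if "r \<in> R" "(E ^^ i) r k" for k r i
    unfolding d_def by (rule Least_le) (use that in blast)
  have d0: "d k = 0" if "k \<in> R" for k using dle[of k 0 k] that by simp
  have dpos: "d k \<noteq> 0" if "k \<in> I" "k \<notin> R" for k
  proof
    assume "d k = 0"
    then show False using dex[OF that(1)] that(2) by auto
  qed
  have parent: "\<exists>z\<in>I. adj k z \<and> d z \<le> d k - 1" if kk: "k \<in> I" "k \<notin> R" for k
  proof -
    obtain r where r: "r \<in> R" "(E ^^ d k) r k" using dex[OF kk(1)] by blast
    have "d k = Suc (d k - 1)" using dpos[OF kk] by simp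
    with r(2) have "(E ^^ Suc (d k - 1)) r k" by simp
    then obtain y where y: "(E ^^ (d k - 1)) r y" "E y k" by (rule relpowp_Suc_E)
    then show ?thesis using dle[OF r(1) y(1)] sym unfolding E_def by blast
  qed
  define w where "w k = c (d k)" for k
  define T where "T = (\<Sum>k\<in>I. w k)"
  define N where "N k = {k'\<in>I. adj k k'}" for k
  have wpos: "\<And>k. 0 < w k" using cp by (simp add: w_def)
  have wR: "\<And>k. k \<in> R \<Longrightarrow> w k = c0" using d0 c0eq by (simp add: w_def)
  have wnR: "w k \<le> 1/D" if "k \<in> I" "k \<notin> R" for k
  proof -
    have "d k = Suc (d k - 1)" using dpos[OF that] by simp
    then have "w k = c (Suc (d k - 1))" by (simp add: w_def)
    then show ?thesis using cp by simp
  qed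
  have splitI: "\<And>f. sum f I = sum f (I - R) + sum f R"
    using sum.subset_diff[OF RI fin] .
  have cIR: "real (card (I - R)) \<le> real (card I)" using card_mono[OF fin, of "I - R"] by auto
  have sR: "(\<Sum>k\<in>R. w k) = 1/2" using wR cardR by (simp add: c0_def)
  have sIR: "(\<Sum>k\<in>I-R. w k) \<le> 1/2"
  proof -
    have "(\<Sum>k\<in>I-R. w k) \<le> real (card (I - R)) * (1/D)"
      using sum_bounded_above[of "I - R" w "1/D"] wnR by auto
    also have "\<dots> \<le> real (card I) * (1/D)" using cIR D1 by (intro mult_right_mono) auto
    also have "\<dots> = 1/2" using D1 by (simp add: D_def)
    finally show ?thesis .
  qed
  have T_le: "T \<le> 1" using sR sIR splitI[of w] by (simp add: T_def)
  have Ine: "I \<noteq> {}" using RI Rne by blast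
  have T_pos: "0 < T" unfolding T_def using wpos fin Ine by (intro sum_pos) auto
  obtain \<rho> where \<rho>: "\<forall>k. pmf \<rho> k = (if k \<in> I then w k / T else 0)"
    using finite_pmf_exists[of I "\<lambda>k. w k / T"] fin wpos T_pos
    by (auto simp: sum_divide_distrib[symmetric] T_def)
  have pmfne: "pmf \<rho> k \<noteq> 0 \<longleftrightarrow> k \<in> I" for k
  proof (cases "k \<in> I")
    case True
    then have "pmf \<rho> k = w k / T" using \<rho> by simp
    then show ?thesis using True wpos[of k] T_pos by simp
  next
    case False
    then show ?thesis using \<rho> by simp
  qed
  have set\<rho>: "set_pmf \<rho> = I"
    by (rule set_eqI) (simp only: set_pmf_iff pmfne)
  define W where "W k = (\<Sum>k'\<in>N k. w k')" for k
  have NI: "\<And>k. N k \<subseteq> I" by (auto simp: N_def)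
  have finN: "\<And>k. finite (N k)" using finite_subset[OF NI fin] .
  have measN: "measure_pmf.prob \<rho> (N k) = W k / T" for k
  proof -
    have "measure_pmf.prob \<rho> (N k) = sum (pmf \<rho>) (N k)" by (rule measure_measure_pmf_finite[OF finN])
    also have "\<dots> = (\<Sum>k'\<in>N k. w k' / T)" using NI \<rho> by (intro sum.cong) auto
    finally show ?thesis by (simp add: W_def sum_divide_distrib)
  qed
  have Wge: "w z \<le> W k" if "z \<in> N k" for k z
    unfolding W_def using that finN wpos by (intro member_le_sum) (auto intro: less_imp_le)
  have kN: "k \<in> N k" if "k \<in> I" for k using that refl by (simp add: N_def)
  have trm: "pmf \<rho> k * (measure_pmf.prob \<rho> (N k)) powr (q-1) = w k * W k powr (q-1) / T powr q"
    if "k \<in> I" for k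
  proof -
    have Tq: "T powr q = T * T powr (q - 1)"
      using powr_add[of T 1 "q - 1"] T_pos by simp
    have "pmf \<rho> k * (measure_pmf.prob \<rho> (N k)) powr (q-1) = (w k / T) * (W k powr (q-1) / T powr (q-1))"
      using that \<rho> measN[of k] by (simp add: powr_divide)
    also have "\<dots> = w k * W k powr (q-1) / (T * T powr (q-1))" by simp
    finally show ?thesis using Tq by simp
  qed
  define S0 where "S0 = (\<Sum>k\<in>I. w k * W k powr (q-1))"
  have sum_eq: "(\<Sum>k\<in>I. pmf \<rho> k * (measure_pmf.prob \<rho> (N k)) powr (q-1)) = S0 / T powr q"
    unfolding S0_def sum_divide_distrib using trm by (intro sum.cong) auto
  have tR: "w k * W k powr (q-1) \<le> c0 powr q" if "k \<in> R" for k
  proof -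
    have k: "k \<in> I" using that RI by blast
    have "c0 \<le> W k" using Wge[OF kN[OF k]] wR[OF that] by simp
    then have "W k powr (q-1) \<le> c0 powr (q-1)" using q c0p by (intro powr_mono2') auto
    then have "w k * W k powr (q-1) \<le> c0 * c0 powr (q-1)" using wR[OF that] c0p by simp
    also have "\<dots> = c0 powr q" using powr_add[of c0 1 "q - 1"] c0p by simp
    finally show ?thesis .
  qed
  have tIR: "w k * W k powr (q-1) \<le> 1/D" if kk: "k \<in> I" "k \<notin> R" for k
  proof -
    obtain z where z: "z \<in> I" "adj k z" "d z \<le> d k - 1" using parent[OF kk] by blast
    define i where "i = d k - 1"
    have dk: "d k = Suc i" using dpos[OF kk] by (simp add: i_def)
    have "c i \<le> c (d z)" using cmono z(3) by (simp add: i_def)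
    also have "c (d z) \<le> W k" using Wge[of z k] z by (simp add: N_def w_def)
    finally have "c i \<le> W k" .
    then have A: "W k powr (q-1) \<le> c i powr (q-1)" using q cp by (intro powr_mono2') auto
    have B: "w k = c i powr (1-q) / D" using dk cSuc by (simp add: w_def)
    have "w k * W k powr (q-1) \<le> w k * c i powr (q-1)"
      using A wpos[of k] by (intro mult_left_mono) auto
    also have "\<dots> = (c i powr (1-q) * c i powr (q-1)) / D" using B by simp
    also have "c i powr (1-q) * c i powr (q-1) = 1" using powr_add[of "c i" "1-q" "q-1"] cp[of i] by simp
    finally show ?thesis by simp
  qed
  have S0_le: "S0 \<le> 1/2 + 2 powr (-q) * real (card R) powr (1-q)"
  proof -
    have "S0 = (\<Sum>k\<in>I-R. w k * W k powr (q-1)) + (\<Sum>k\<in>R. w k * W k powr (q-1))"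
      unfolding S0_def by (rule splitI)
    also have "(\<Sum>k\<in>I-R. w k * W k powr (q-1)) \<le> real (card (I - R)) * (1/D)"
      using sum_bounded_above[of "I - R" _ "1/D"] tIR by auto
    also have "\<dots> \<le> real (card I) * (1/D)" using cIR D1 by (intro mult_right_mono) auto
    also have "\<dots> = 1/2" using D1 by (simp add: D_def)
    also have "(\<Sum>k\<in>R. w k * W k powr (q-1)) \<le> real (card R) * c0 powr q"
      using sum_bounded_above[of R _ "c0 powr q"] tR by auto
    also have "real (card R) * c0 powr q = 2 powr (-q) * real (card R) powr (1-q)"
    proof -
      define x where "x = real (card R)"
      have x: "0 < x" using cardR by (simp add: x_def)
      have "c0 powr q = 1 / (2 powr q * x powr q)"
        unfolding c0_def x_def[symmetric] by (simp add: powr_divide powr_mult)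
      moreover have "x powr (1-q) = x / x powr q" using x by (simp add: powr_diff)
      moreover have "2 powr (-q) = 1 / 2 powr q" by (simp add: powr_minus_divide)
      ultimately show ?thesis unfolding x_def[symmetric] by simp
    qed
    finally show ?thesis by simp
  qed
  have S0_nn: "0 \<le> S0" unfolding S0_def using wpos by (intro sum_nonneg mult_nonneg_nonneg) (auto intro: less_imp_le)
  have Tq1: "1 \<le> T powr q" using powr_mono2'[of q T 1] q T_pos T_le by simp
  have "S0 / T powr q \<le> S0 / 1" using S0_nn Tq1 by (intro divide_left_mono) auto
  then show ?thesis using sum_eq S0_le set\<rho> by (intro exI[of _ \<rho>]) (simp add: N_def)
qed



definition idx :: "nat \<Rightarrow> real^'d \<Rightarrow> int^'d" where
  "idx n y = (\<chi> j. \<lfloor>y $ j * 2^n\<rfloor>)"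

lemma cube_coord: "(of_int a / 2^n \<le> (t::real) \<and> t < (of_int a + 1) / 2^n) \<longleftrightarrow> a = \<lfloor>t * 2^n\<rfloor>"
proof -
  have "(of_int a / 2^n \<le> t \<and> t < (of_int a + 1) / 2^n) \<longleftrightarrow> (of_int a \<le> t * 2^n \<and> t * 2^n < of_int a + 1)"
    by (simp add: pos_divide_le_eq pos_less_divide_eq)
  also have "\<dots> \<longleftrightarrow> \<lfloor>t * 2^n\<rfloor> = a" by (simp add: floor_eq_iff)
  finally show ?thesis by auto
qed

lemma cube_iff: "y \<in> dyadic_cube n k \<longleftrightarrow> k = idx n y"
  unfolding dyadic_cube_def idx_def using cube_coord by (auto simp: vec_eq_iff)

lemma cube_disj: "y \<in> dyadic_cube n k \<Longrightarrow> y \<in> dyadic_cube n k' \<Longrightarrow> k = k'"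
  by (simp add: cube_iff)

lemma in_own_cube: "y \<in> dyadic_cube n (idx n y)"
  by (simp add: cube_iff)

lemma conv_lt: "(a::real) < h \<Longrightarrow> b < h \<Longrightarrow> 0 \<le> u \<Longrightarrow> 0 \<le> v \<Longrightarrow> u + v = 1 \<Longrightarrow> u * a + v * b < h"
proof (cases "u = 0")
  case True
  then show "a < h \<Longrightarrow> b < h \<Longrightarrow> 0 \<le> u \<Longrightarrow> 0 \<le> v \<Longrightarrow> u + v = 1 \<Longrightarrow> u * a + v * b < h" by simp
next
  case False
  assume as: "a < h" "b < h" "0 \<le> u" "0 \<le> v" "u + v = 1"
  then have "u * a < u * h" using False by simp
  moreover have "v * b \<le> v * h" using as by (simp add: mult_left_mono)
  ultimately show ?thesis using as by (simp add: algebra_simps) (metis add_less_le_mono distrib_left mult_1_right)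
qed

lemma conv_ge: "(l::real) \<le> a \<Longrightarrow> l \<le> b \<Longrightarrow> 0 \<le> u \<Longrightarrow> 0 \<le> v \<Longrightarrow> u + v = 1 \<Longrightarrow> l \<le> u * a + v * b"
proof -
  assume as: "l \<le> a" "l \<le> b" "0 \<le> u" "0 \<le> v" "u + v = 1"
  have "u * l \<le> u * a" "v * l \<le> v * b" using as by (simp_all add: mult_left_mono)
  then have "u * l + v * l \<le> u * a + v * b" by simp
  moreover have "u * l + v * l = l" using as by (metis distrib_right mult_1)
  ultimately show ?thesis by simp
qed

lemma cube_convex: "convex (dyadic_cube n k)"
  unfolding convex_def dyadic_cube_def
  by (auto intro!: conv_lt conv_ge)

lemma cube_connected: "connected (dyadic_cube n k)"
  by (rule convex_connected[OF cube_convex])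

lemma cube_closure:
  fixes k :: "int^'d"
  shows "closure (dyadic_cube n k) \<subseteq> {y. \<forall>j. of_int (k $ j) / 2 ^ n \<le> y $ j \<and> y $ j \<le> (of_int (k $ j) + 1) / 2 ^ n}"
proof -
  have eq: "{y. \<forall>j. of_int (k $ j) / 2 ^ n \<le> y $ j \<and> y $ j \<le> (of_int (k $ j) + 1) / 2 ^ n}
      = cbox ((\<chi> j. of_int (k $ j) / 2 ^ n) :: real^'d) (\<chi> j. (of_int (k $ j) + 1) / 2 ^ n)"
    by (auto simp: mem_box_cart)
  show ?thesis unfolding eq
    by (rule closure_minimal) (auto simp: mem_box_cart dyadic_cube_def less_imp_le)
qed

lemma adj_of_closure:
  fixes k1 k2 :: "int^'d"
  assumes "y \<in> closure (dyadic_cube n k1)" "y \<in> dyadic_cube n k2"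
  shows "\<bar>k1 $ j - k2 $ j\<bar> \<le> 1"
proof -
  have a0: "of_int (k1 $ j) / 2 ^ n \<le> y $ j" "y $ j \<le> (of_int (k1 $ j) + 1) / 2 ^ n"
    using cube_closure assms(1) by blast+
  have a: "of_int (k1 $ j) \<le> y $ j * 2^n" "y $ j * 2^n \<le> of_int (k1 $ j) + 1"
    using a0 by (simp_all add: pos_divide_le_eq pos_le_divide_eq)
  have b: "of_int (k2 $ j) \<le> y $ j * 2^n" "y $ j * 2^n < of_int (k2 $ j) + 1"
    using assms(2) unfolding dyadic_cube_def by (auto simp: pos_divide_le_eq pos_less_divide_eq)
  have "real_of_int (k2 $ j) < real_of_int (k1 $ j) + 2" using a b by linarith
  then have "real_of_int (k2 $ j) < real_of_int (k1 $ j + 2)" by simp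
  then have c: "k2 $ j < k1 $ j + 2" by (simp only: of_int_less_iff)
  have "real_of_int (k1 $ j) < real_of_int (k2 $ j) + 1" using a b by linarith
  then have "real_of_int (k1 $ j) < real_of_int (k2 $ j + 1)" by simp
  then have d: "k1 $ j < k2 $ j + 1" by (simp only: of_int_less_iff)
  from c d show ?thesis by linarith
qed

lemma adj_dist:
  assumes "y \<in> dyadic_cube n k" "y' \<in> dyadic_cube n k'" "\<bar>k $ j - k' $ j\<bar> \<le> 1"
  shows "\<bar>y $ j - y' $ j\<bar> < 2 / 2 ^ n"
proof -
  have a: "of_int (k $ j) \<le> y $ j * 2^n" "y $ j * 2^n < of_int (k $ j) + 1"
    using assms(1) unfolding dyadic_cube_def by (auto simp: pos_divide_le_eq pos_less_divide_eq)
  have b: "of_int (k' $ j) \<le> y' $ j * 2^n" "y' $ j * 2^n < of_int (k' $ j) + 1"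
    using assms(2) unfolding dyadic_cube_def by (auto simp: pos_divide_le_eq pos_less_divide_eq)
  have "real_of_int \<bar>k $ j - k' $ j\<bar> \<le> real_of_int 1" using assms(3) by (simp only: of_int_le_iff)
  then have c: "\<bar>real_of_int (k $ j) - real_of_int (k' $ j)\<bar> \<le> 1" by simp
  have "\<bar>y $ j * 2^n - y' $ j * 2^n\<bar> < 2" using a b c by linarith
  then have "\<bar>y $ j - y' $ j\<bar> * 2^n < 2" by (simp add: left_diff_distrib[symmetric] abs_mult)
  then show ?thesis by (simp add: pos_less_divide_eq)
qed

lemma same_cube_dist:
  assumes "y \<in> dyadic_cube n k" "y' \<in> dyadic_cube n k"
  shows "\<bar>y $ j - y' $ j\<bar> < 1 / 2 ^ n"
proof -
  have a: "of_int (k $ j) \<le> y $ j * 2^n" "y $ j * 2^n < of_int (k $ j) + 1"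
    using assms(1) unfolding dyadic_cube_def by (auto simp: pos_divide_le_eq pos_less_divide_eq)
  have b: "of_int (k $ j) \<le> y' $ j * 2^n" "y' $ j * 2^n < of_int (k $ j) + 1"
    using assms(2) unfolding dyadic_cube_def by (auto simp: pos_divide_le_eq pos_less_divide_eq)
  have "\<bar>y $ j * 2^n - y' $ j * 2^n\<bar> < 1" using a b by linarith
  then have "\<bar>y $ j - y' $ j\<bar> * 2^n < 1" by (simp add: left_diff_distrib[symmetric] abs_mult)
  then show ?thesis by (simp add: pos_less_divide_eq)
qed

lemma finite_vecs: "finite (A :: int set) \<Longrightarrow> finite {k :: int^'d. \<forall>j. k $ j \<in> A}"
proof -
  assume A: "finite A"
  have "{k :: int^'d. \<forall>j. k $ j \<in> A} \<subseteq> vec_lambda ` (Pi\<^sub>E UNIV (\<lambda>_. A))"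
  proof
    fix k :: "int^'d" assume "k \<in> {k. \<forall>j. k $ j \<in> A}"
    then have "vec_nth k \<in> Pi\<^sub>E UNIV (\<lambda>_. A)" by (simp add: PiE_UNIV_domain)
    then show "k \<in> vec_lambda ` (Pi\<^sub>E UNIV (\<lambda>_. A))" by (metis image_eqI vec_nth_inverse)
  qed
  moreover have "finite (Pi\<^sub>E (UNIV::'d set) (\<lambda>_. A))" using A by (intro finite_PiE) auto
  ultimately show ?thesis using finite_subset by blast
qed

lemma finite_cubes:
  assumes "bounded (K :: (real^'d) set)"
  shows "finite {k. dyadic_cube n k \<inter> K \<noteq> {}}"
proof -
  obtain B where B: "\<And>x. x \<in> K \<Longrightarrow> norm x \<le> B" using assms bounded_iff by blast
  define M where "M = \<lceil>B * 2^n\<rceil> + 1"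
  have "{k. dyadic_cube n k \<inter> K \<noteq> {}} \<subseteq> {k. \<forall>j. k $ j \<in> {-M..M}}"
  proof (rule subsetI)
    fix k :: "int^'d" assume "k \<in> {k. dyadic_cube n k \<inter> K \<noteq> {}}"
    then obtain y where y: "y \<in> dyadic_cube n k" "y \<in> K" by blast
    show "k \<in> {k. \<forall>j. k $ j \<in> {-M..M}}"
    proof (simp only: mem_Collect_eq, rule allI)
    fix j
    have k: "k $ j = \<lfloor>y $ j * 2^n\<rfloor>" using y(1) by (simp add: cube_iff idx_def)
    have "\<bar>y $ j\<bar> \<le> B" using B[OF y(2)] component_le_norm_cart[of y j] by linarith
    then have "\<bar>y $ j * 2^n\<bar> \<le> B * 2^n" by (simp add: abs_mult)
    then have "- (B * 2^n) \<le> y $ j * 2^n" "y $ j * 2^n \<le> B * 2^n" by linarith+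
    then have "- M \<le> \<lfloor>y $ j * 2^n\<rfloor>" "\<lfloor>y $ j * 2^n\<rfloor> \<le> M" unfolding M_def
      by linarith+
    then show "k $ j \<in> {-M..M}" using k by simp
    qed
  qed
  then show ?thesis using finite_vecs[of "{-M..M}"] finite_subset by blast
qed



lemma roots_exist:
  fixes K :: "(real^'d) set" and n :: nat
  assumes bK: "bounded K" and Kne: "K \<noteq> {}"
  defines "I \<equiv> {k. dyadic_cube n k \<inter> K \<noteq> {}}"
  defines "adj \<equiv> \<lambda>k k'::int^'d. \<forall>j. \<bar>k $ j - k' $ j\<bar> \<le> 1"
  shows "\<exists>R. R \<subseteq> I \<and> R \<noteq> {} \<and> card R \<le> C_n n K \<and>
           (\<forall>k\<in>I. \<exists>r\<in>R. (\<lambda>a b. a \<in> I \<and> b \<in> I \<and> adj a b)\<^sup>*\<^sup>* r k)"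
proof -
  define E where "E = (\<lambda>a b. a \<in> I \<and> b \<in> I \<and> adj a b)"
  define cube :: "int^'d \<Rightarrow> (real^'d) set" where "cube = dyadic_cube n"
  have finI: "finite I" unfolding I_def using finite_cubes[OF bK] .
  define W where "W = \<Union> (cube ` I)"
  have Weq: "\<Union> {dyadic_cube n k | k. dyadic_cube n k \<inter> K \<noteq> {}} = W"
  proof -
    have "{dyadic_cube n k | k. dyadic_cube n k \<inter> K \<noteq> {}} = cube ` I"
      unfolding cube_def I_def by (auto simp: image_def)
    then show ?thesis unfolding W_def by simp
  qed
  define pt where "pt k = (SOME y. y \<in> cube k \<inter> K)" for k
  have pt: "pt k \<in> cube k" if "k \<in> I" for k
  proof -
    have "\<exists>y. y \<in> cube k \<inter> K" using that unfolding I_def cube_def by blast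
    then have "pt k \<in> cube k \<inter> K" unfolding pt_def by (rule someI_ex)
    then show ?thesis by blast
  qed
  define comp where "comp k = connected_component_set W (pt k)" for k
  have cubeW: "cube k \<subseteq> W" if "k \<in> I" for k using that unfolding W_def by blast
  have cube_comp: "cube k \<subseteq> comp k" if "k \<in> I" for k
    unfolding comp_def using pt[OF that] cube_connected[of n k] cubeW[OF that]
    by (intro connected_component_maximal) (auto simp: cube_def)
  have compeq: "components W = comp ` I"
  proof
    show "components W \<subseteq> comp ` I"
    proof
      fix U assume "U \<in> components W"
      then obtain x where x: "x \<in> W" "U = connected_component_set W x" by (auto simp: components_iff)
      then obtain k where k: "k \<in> I" "x \<in> cube k" unfolding W_def by blast
      have "x \<in> comp k" using cube_comp[OF k(1)] k(2) by blast
      then have "connected_component_set W x = comp k" unfolding comp_def by (rule connected_component_eq)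
      then show "U \<in> comp ` I" using x k by blast
    qed
    show "comp ` I \<subseteq> components W"
    proof
      fix U assume "U \<in> comp ` I"
      then obtain k where k: "k \<in> I" "U = comp k" by blast
      have "pt k \<in> W" using pt[OF k(1)] cubeW[OF k(1)] by blast
      then show "U \<in> components W" unfolding components_iff comp_def k(2) by blast
    qed
  qed
  have finC: "finite (components W)" unfolding compeq using finI by (rule finite_imageI)
  have Cn: "C_n n K = card (components W)" unfolding C_n_def Weq ..
  define root where "root U = (SOME k. k \<in> I \<and> comp k = U)" for U
  have root: "root U \<in> I \<and> comp (root U) = U" if "U \<in> components W" for U
  proof -
    have "U \<in> comp ` I" using that compeq by simp
    then have "\<exists>k. k \<in> I \<and> comp k = U" by (simp add: image_iff) (metis)
    then show ?thesis unfolding root_def by (rule someI_ex)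
  qed
  define R where "R = root ` components W"
  have RI: "R \<subseteq> I" using root unfolding R_def by blast
  obtain x where "x \<in> K" using Kne by blast
  then have "idx n x \<in> I" unfolding I_def using in_own_cube[of x n] by blast
  then have "components W \<noteq> {}" unfolding compeq by blast
  then have Rne: "R \<noteq> {}" unfolding R_def by blast
  have cardR: "card R \<le> C_n n K" unfolding Cn R_def by (rule card_image_le[OF finC])
  have reach: "\<exists>r\<in>R. E\<^sup>*\<^sup>* r k" if kI: "k \<in> I" for k
  proof -
    define U where "U = comp k"
    have UC: "U \<in> components W" unfolding compeq using kI U_def by blast
    define r0 where "r0 = root U"
    have r0: "r0 \<in> I" "comp r0 = comp k" using root[OF UC] by (auto simp: r0_def U_def)
    have r0R: "r0 \<in> R" using UC unfolding R_def r0_def by blast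
    define A where "A = {k'\<in>I. E\<^sup>*\<^sup>* r0 k'}"
    define VA where "VA = \<Union> (cube ` A)"
    define VB where "VB = \<Union> (cube ` (I - A))"
    have WAB: "W = VA \<union> VB" unfolding W_def VA_def VB_def A_def by blast
    have finA: "finite A" "finite (I - A)" using finI unfolding A_def by auto
    have clA: "closure VA \<subseteq> \<Union> ((\<lambda>a. closure (cube a)) ` A)"
      unfolding VA_def using finA(1) by (intro closure_minimal closed_Union) (auto intro: closure_subset[THEN subsetD])
    have clB: "closure VB \<subseteq> \<Union> ((\<lambda>a. closure (cube a)) ` (I - A))"
      unfolding VB_def using finA(2) by (intro closure_minimal closed_Union) (auto intro: closure_subset[THEN subsetD])
    have AE: "b \<in> A" if "a \<in> A" "b \<in> I" "adj a b" for a b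
    proof -
      have "E a b" using that unfolding E_def A_def by blast
      then show ?thesis using that unfolding A_def by (auto intro: rtranclp.rtrancl_into_rtrancl)
    qed
    have adjsym: "adj a b \<Longrightarrow> adj b a" for a b unfolding adj_def by (simp add: abs_minus_commute)
    have s1: "VB \<inter> closure VA = {}"
    proof (rule ccontr)
      assume "VB \<inter> closure VA \<noteq> {}"
      then obtain y a b where y: "a \<in> A" "y \<in> closure (cube a)" "b \<in> I - A" "y \<in> cube b"
        using clA unfolding VB_def by blast
      have "adj a b" unfolding adj_def using adj_of_closure[of y n a b] y by (simp add: cube_def)
      then show False using AE y by blast
    qed
    have s2: "VA \<inter> closure VB = {}"
    proof (rule ccontr)
      assume "VA \<inter> closure VB \<noteq> {}"
      then obtain y a b where y: "a \<in> A" "y \<in> cube a" "b \<in> I - A" "y \<in> closure (cube b)"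
        using clB unfolding VA_def by blast
      have "adj b a" unfolding adj_def using adj_of_closure[of y n b a] y by (simp add: cube_def)
      then show False using AE y adjsym A_def by blast
    qed
    have sep: "separatedin euclidean VA VB" unfolding separatedin_def using s1 s2 by auto
    have "connectedin euclidean U" unfolding U_def comp_def by simp
    moreover have "U \<subseteq> VA \<union> VB" unfolding U_def comp_def WAB[symmetric] by (rule connected_component_subset)
    ultimately have "U \<subseteq> VA \<or> U \<subseteq> VB" using connectedin_subset_separated_union[OF _ sep] by blast
    moreover have "pt r0 \<in> U" using pt[OF r0(1)] cube_comp[OF r0(1)] r0(2) U_def by blast
    moreover have "r0 \<in> A" unfolding A_def using r0(1) by simp
    then have "pt r0 \<in> VA" using pt[OF r0(1)] unfolding VA_def by blast
    moreover have "pt r0 \<notin> VB"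
    proof
      assume "pt r0 \<in> VB"
      then obtain b where "b \<in> I - A" "pt r0 \<in> cube b" unfolding VB_def by blast
      then have "b = r0" using pt[OF r0(1)] cube_disj[of "pt r0" n b r0] unfolding cube_def by blast
      then show False using \<open>b \<in> I - A\<close> \<open>r0 \<in> A\<close> by blast
    qed
    ultimately have "U \<subseteq> VA" by blast
    then have "pt k \<in> VA" using pt[OF kI] cube_comp[OF kI] U_def by blast
    then obtain a where "a \<in> A" "pt k \<in> cube a" unfolding VA_def by blast
    then have "a = k" using pt[OF kI] cube_disj[of "pt k" n a k] unfolding cube_def by blast
    then have "E\<^sup>*\<^sup>* r0 k" using \<open>a \<in> A\<close> unfolding A_def by blast
    then show ?thesis using r0R by blast
  qed
  show ?thesis using RI Rne cardR reach unfolding E_def by blast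
qed



lemma prob_finite_sum:
  assumes "finite S" "set_pmf P \<subseteq> S"
  shows "measure_pmf.prob P A = (\<Sum>x\<in>A \<inter> S. pmf P x)"
proof -
  have "measure_pmf.prob P A = measure_pmf.prob P (A \<inter> set_pmf P)" by (simp add: measure_Int_set_pmf)
  also have "A \<inter> set_pmf P = (A \<inter> S) \<inter> set_pmf P" using assms(2) by blast
  also have "measure_pmf.prob P \<dots> = measure_pmf.prob P (A \<inter> S)" by (rule measure_Int_set_pmf)
  also have "\<dots> = (\<Sum>x\<in>A \<inter> S. pmf P x)" using assms(1) by (intro measure_measure_pmf_finite) simp
  finally show ?thesis .
qed

lemma pmf_mixture:
  assumes "0 \<le> \<theta>" "\<theta> \<le> 1"
  shows "pmf (mixture \<theta> \<mu> \<nu>) x = (1 - \<theta>) * pmf \<mu> x + \<theta> * pmf \<nu> x"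
  unfolding mixture_def pmf_bind using assms by simp

lemma set_mixture: "set_pmf (mixture \<theta> \<mu> \<nu>) \<subseteq> set_pmf \<mu> \<union> set_pmf \<nu>"
  unfolding mixture_def by (auto split: if_splits)

lemma prob_mixture:
  assumes "0 \<le> \<theta>" "\<theta> \<le> 1" "finite (set_pmf \<mu>)" "finite (set_pmf \<nu>)"
  shows "measure_pmf.prob (mixture \<theta> \<mu> \<nu>) A = (1 - \<theta>) * measure_pmf.prob \<mu> A + \<theta> * measure_pmf.prob \<nu> A"
proof -
  define S where "S = set_pmf \<mu> \<union> set_pmf \<nu>"
  have fS: "finite S" using assms by (simp add: S_def)
  have "measure_pmf.prob (mixture \<theta> \<mu> \<nu>) A = (\<Sum>x\<in>A \<inter> S. pmf (mixture \<theta> \<mu> \<nu>) x)"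
    using fS set_mixture[of \<theta> \<mu> \<nu>] by (intro prob_finite_sum) (auto simp: S_def)
  also have "\<dots> = (\<Sum>x\<in>A \<inter> S. (1 - \<theta>) * pmf \<mu> x + \<theta> * pmf \<nu> x)"
    using assms by (simp add: pmf_mixture)
  also have "\<dots> = (1 - \<theta>) * (\<Sum>x\<in>A \<inter> S. pmf \<mu> x) + \<theta> * (\<Sum>x\<in>A \<inter> S. pmf \<nu> x)"
    by (simp add: sum.distrib sum_distrib_left)
  also have "(\<Sum>x\<in>A \<inter> S. pmf \<mu> x) = measure_pmf.prob \<mu> A"
    using fS by (intro prob_finite_sum[symmetric]) (auto simp: S_def)
  also have "(\<Sum>x\<in>A \<inter> S. pmf \<nu> x) = measure_pmf.prob \<nu> A"
    using fS by (intro prob_finite_sum[symmetric]) (auto simp: S_def)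
  finally show ?thesis .
qed

lemma mixture_bound:
  fixes \<mu> \<nu>n :: "'a pmf" and B :: "'a \<Rightarrow> 'a set" and q \<theta> J :: real
  assumes f\<mu>: "finite (set_pmf \<mu>)" and f\<nu>: "finite (set_pmf \<nu>n)" and th: "0 < \<theta>" "\<theta> < 1" and q: "q \<le> 0"
    and Bself: "\<And>x. x \<in> B x"
    and J: "measure_pmf.expectation \<nu>n (\<lambda>x. (measure_pmf.prob \<nu>n (B x)) powr (q-1)) \<le> J"
  shows "measure_pmf.expectation (mixture \<theta> \<mu> \<nu>n) (\<lambda>x. (measure_pmf.prob (mixture \<theta> \<mu> \<nu>n) (B x)) powr (q-1))
     \<le> real (card (set_pmf \<mu>)) * (1-\<theta>) powr q * (Min (pmf \<mu> ` set_pmf \<mu>)) powr q + \<theta> powr q * J"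
proof -
  define \<nu> where "\<nu> = mixture \<theta> \<mu> \<nu>n"
  define S where "S = set_pmf \<mu> \<union> set_pmf \<nu>n"
  define F where "F x = (measure_pmf.prob \<nu> (B x)) powr (q-1)" for x
  define G where "G x = (measure_pmf.prob \<nu>n (B x)) powr (q-1)" for x
  define a where "a = Min (pmf \<mu> ` set_pmf \<mu>)"
  have fS: "finite S" using f\<mu> f\<nu> by (simp add: S_def)
  have pm: "pmf \<nu> x = (1-\<theta>) * pmf \<mu> x + \<theta> * pmf \<nu>n x" for x
    unfolding \<nu>_def using th by (intro pmf_mixture) auto
  have pr: "measure_pmf.prob \<nu> A = (1-\<theta>) * measure_pmf.prob \<mu> A + \<theta> * measure_pmf.prob \<nu>n A" for A
    unfolding \<nu>_def using th f\<mu> f\<nu> by (intro prob_mixture) auto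
  have a_le: "a \<le> pmf \<mu> x" if "x \<in> set_pmf \<mu>" for x
    unfolding a_def using f\<mu> that by (intro Min_le) auto
  have "a \<in> pmf \<mu> ` set_pmf \<mu>" unfolding a_def using f\<mu> set_pmf_not_empty by (intro Min_in) auto
  then have a_pos: "0 < a" using pmf_nonneg by (auto simp: set_pmf_iff less_le)
  have E1: "measure_pmf.expectation \<nu> F = (\<Sum>x\<in>S. F x * pmf \<nu> x)"
    using fS set_mixture[of \<theta> \<mu> \<nu>n] by (intro integral_measure_pmf_real) (auto simp: S_def \<nu>_def)
  have E2: "measure_pmf.expectation \<nu>n G = (\<Sum>x\<in>S. G x * pmf \<nu>n x)"
    using fS by (intro integral_measure_pmf_real) (auto simp: S_def)
  have split: "(\<Sum>x\<in>S. F x * pmf \<nu> x) = (\<Sum>x\<in>S. F x * ((1-\<theta>) * pmf \<mu> x)) + (\<Sum>x\<in>S. F x * (\<theta> * pmf \<nu>n x))"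
    unfolding pm by (simp add: distrib_left sum.distrib)
  have b1: "F x * ((1-\<theta>) * pmf \<mu> x) \<le> (if x \<in> set_pmf \<mu> then ((1-\<theta>) * a) powr q else 0)" for x
  proof (cases "x \<in> set_pmf \<mu>")
    case True
    define t where "t = (1-\<theta>) * pmf \<mu> x"
    have px: "0 < pmf \<mu> x" using True pmf_nonneg by (auto simp: set_pmf_iff less_le)
    have tpos: "0 < t" unfolding t_def using px th by simp
    have "pmf \<mu> x = measure_pmf.prob \<mu> {x}" by (simp add: measure_pmf_single)
    also have "\<dots> \<le> measure_pmf.prob \<mu> (B x)" using Bself[of x] by (intro measure_pmf.finite_measure_mono) auto
    finally have "t \<le> (1-\<theta>) * measure_pmf.prob \<mu> (B x)" unfolding t_def using th by (intro mult_left_mono) auto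
    also have "\<dots> \<le> measure_pmf.prob \<nu> (B x)" unfolding pr using th by simp
    finally have tle: "t \<le> measure_pmf.prob \<nu> (B x)" .
    have "F x \<le> t powr (q-1)" unfolding F_def using tle tpos q by (intro powr_mono2') auto
    then have "F x * t \<le> t powr (q-1) * t" using tpos by (intro mult_right_mono) auto
    also have "t powr (q-1) * t = t powr q" using powr_add[of t "q-1" 1] tpos by simp
    also have "t powr q \<le> ((1-\<theta>) * a) powr q" unfolding t_def
      using q a_pos th a_le[OF True] by (intro powr_mono2') (auto intro: mult_left_mono)
    finally show ?thesis using True by (simp add: t_def)
  next
    case False
    then show ?thesis by (simp add: set_pmf_iff)
  qed
  have b2: "F x * (\<theta> * pmf \<nu>n x) \<le> \<theta> powr q * (G x * pmf \<nu>n x)" for x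
  proof (cases "x \<in> set_pmf \<nu>n")
    case True
    have pos: "0 < measure_pmf.prob \<nu>n (B x)" using True Bself by (intro measure_pmf_posI)
    have "\<theta> * measure_pmf.prob \<nu>n (B x) \<le> measure_pmf.prob \<nu> (B x)" unfolding pr using th by simp
    then have "F x \<le> (\<theta> * measure_pmf.prob \<nu>n (B x)) powr (q-1)" unfolding F_def
      using pos th q by (intro powr_mono2') auto
    also have "\<dots> = \<theta> powr (q-1) * G x" unfolding G_def by (simp add: powr_mult)
    finally have "F x * (\<theta> * pmf \<nu>n x) \<le> \<theta> powr (q-1) * G x * (\<theta> * pmf \<nu>n x)"
      using th by (intro mult_right_mono) auto
    also have "\<dots> = (\<theta> powr (q-1) * \<theta>) * (G x * pmf \<nu>n x)" by simp
    also have "\<theta> powr (q-1) * \<theta> = \<theta> powr q" using powr_add[of \<theta> "q-1" 1] th by simp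
    finally show ?thesis .
  next
    case False
    then show ?thesis by (simp add: set_pmf_iff)
  qed
  have s1: "(\<Sum>x\<in>S. F x * ((1-\<theta>) * pmf \<mu> x)) \<le> real (card (set_pmf \<mu>)) * ((1-\<theta>) * a) powr q"
  proof -
    have "(\<Sum>x\<in>S. F x * ((1-\<theta>) * pmf \<mu> x)) \<le> (\<Sum>x\<in>S. if x \<in> set_pmf \<mu> then ((1-\<theta>) * a) powr q else 0)"
      by (rule sum_mono) (rule b1)
    also have "\<dots> = (\<Sum>x\<in>S \<inter> set_pmf \<mu>. ((1-\<theta>) * a) powr q)" by (rule sum.inter_restrict[OF fS, symmetric])
    also have "S \<inter> set_pmf \<mu> = set_pmf \<mu>" by (auto simp: S_def)
    finally show ?thesis by simp
  qed
  have s2: "(\<Sum>x\<in>S. F x * (\<theta> * pmf \<nu>n x)) \<le> \<theta> powr q * J"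
  proof -
    have "(\<Sum>x\<in>S. F x * (\<theta> * pmf \<nu>n x)) \<le> (\<Sum>x\<in>S. \<theta> powr q * (G x * pmf \<nu>n x))"
      by (rule sum_mono) (rule b2)
    also have "\<dots> = \<theta> powr q * measure_pmf.expectation \<nu>n G" unfolding E2 by (simp add: sum_distrib_left)
    also have "\<dots> \<le> \<theta> powr q * J" using J unfolding G_def by (intro mult_left_mono) auto
    finally show ?thesis .
  qed
  have "((1-\<theta>) * a) powr q = (1-\<theta>) powr q * a powr q" by (rule powr_mult)
  then show ?thesis using E1 split s1 s2 unfolding \<nu>_def[symmetric] F_def[symmetric] a_def[symmetric]
    by (simp add: mult.assoc)
qed



theorem lemma2p14:
  fixes K :: "(real^'d) set" and n :: nat and q :: real
  assumes "compact K" and "K \<noteq> {}" and "n \<ge> 1" and "q \<le> 0"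
  shows "\<exists>\<nu>n :: (real^'d) pmf. finite (set_pmf \<nu>n) \<and> set_pmf \<nu>n \<subseteq> K \<and>
    (\<forall>(\<mu> :: (real^'d) pmf) \<theta>. finite (set_pmf \<mu>) \<and> set_pmf \<mu> \<subseteq> K \<and> 0 < \<theta> \<and> \<theta> < 1 \<longrightarrow>
       (let \<nu> = mixture \<theta> \<mu> \<nu>n; N = card (set_pmf \<mu>); a = Min (pmf \<mu> ` set_pmf \<mu>) in
          I_nu \<nu> (3 * 2 powr (- real n)) q
            \<le> real N * (1 - \<theta>) powr q * a powr q + \<theta> powr q
               + \<theta> powr q / 2 powr q * real (C_n n K) powr (1 - q)
          \<and> (\<forall>x\<in>K. measure_pmf.prob \<nu> (linf_ball x (3 * 2 powr (- real n))) > 0)))"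
proof -
  define r where "r = 3 * 2 powr (- real n)"
  have e: "(2::real) powr real n = 2^n" by (rule powr_realpow) simp
  have "(2::real) powr (- real n) = inverse (2 powr real n)" by (rule powr_minus)
  then have r_eq: "r = 3 / 2^n" by (simp add: r_def e divide_inverse)
  have r0: "0 \<le> r" by (simp add: r_eq)
  have bK: "bounded K" using assms(1) by (rule compact_imp_bounded)
  define I where "I = {k. dyadic_cube n k \<inter> K \<noteq> {}}"
  define adj where "adj = (\<lambda>k k'::int^'d. \<forall>j. \<bar>k $ j - k' $ j\<bar> \<le> 1)"
  have "\<exists>R. R \<subseteq> I \<and> R \<noteq> {} \<and> card R \<le> C_n n K \<and>
           (\<forall>k\<in>I. \<exists>r\<in>R. (\<lambda>a b. a \<in> I \<and> b \<in> I \<and> adj a b)\<^sup>*\<^sup>* r k)"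
    unfolding I_def adj_def by (rule roots_exist[OF bK assms(2)])
  then obtain R where R1: "R \<subseteq> I" and R2: "R \<noteq> {}" and R3: "card R \<le> C_n n K"
      and R4: "\<forall>k\<in>I. \<exists>r\<in>R. (\<lambda>a b. a \<in> I \<and> b \<in> I \<and> adj a b)\<^sup>*\<^sup>* r k"
    by (elim exE conjE)
  note R = R1 R2 R3 R4[rule_format]
  have finI: "finite I" unfolding I_def using finite_cubes[OF bK] .
  have arefl: "adj k k" for k unfolding adj_def by simp
  have asym: "adj a b \<Longrightarrow> adj b a" for a b unfolding adj_def by (simp add: abs_minus_commute)
  have "\<exists>\<rho>. set_pmf \<rho> = I \<and> (\<Sum>k\<in>I. pmf \<rho> k * (measure_pmf.prob \<rho> {k'\<in>I. adj k k'}) powr (q-1))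
            \<le> 1 + 2 powr (-q) * real (card R) powr (1-q)"
    apply (rule weights[OF finI R(1) R(2)])
       apply (rule arefl)
      apply (erule asym)
     apply (erule R(4))
    apply (rule assms(4))
    done
  then obtain \<rho> where \<rho>: "set_pmf \<rho> = I"
      "(\<Sum>k\<in>I. pmf \<rho> k * (measure_pmf.prob \<rho> {k'\<in>I. adj k k'}) powr (q-1))
            \<le> 1 + 2 powr (-q) * real (card R) powr (1-q)"
    by (elim exE conjE)
  define p where "p k = (SOME y. y \<in> dyadic_cube n k \<inter> K)" for k
  have p: "p k \<in> dyadic_cube n k \<and> p k \<in> K" if "k \<in> I" for k
  proof -
    have "\<exists>y. y \<in> dyadic_cube n k \<inter> K" using that unfolding I_def by blast
    then have "p k \<in> dyadic_cube n k \<inter> K" unfolding p_def by (rule someI_ex)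
    then show ?thesis by blast
  qed
  define \<nu>n where "\<nu>n = map_pmf p \<rho>"
  have set\<nu>: "set_pmf \<nu>n = p ` I" unfolding \<nu>n_def using \<rho>(1) by simp
  have fin\<nu>: "finite (set_pmf \<nu>n)" unfolding set\<nu> using finI by simp
  have sub\<nu>: "set_pmf \<nu>n \<subseteq> K" unfolding set\<nu> using p by blast
  have ballN: "{k'\<in>I. adj k k'} \<subseteq> p -` linf_ball (p k) r" if kI: "k \<in> I" for k
  proof
    fix k' assume "k' \<in> {k'\<in>I. adj k k'}"
    then have k': "k' \<in> I" "adj k k'" by auto
    have "\<bar>p k' $ j - p k $ j\<bar> \<le> r" for j
    proof -
      have "\<bar>k' $ j - k $ j\<bar> \<le> 1" using k'(2) unfolding adj_def by (simp add: abs_minus_commute)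
      then have "\<bar>p k' $ j - p k $ j\<bar> < 2 / 2 ^ n"
        using p[OF k'(1)] p[OF kI] by (intro adj_dist) auto
      also have "\<dots> \<le> r" unfolding r_eq by (simp add: divide_right_mono)
      finally show ?thesis by simp
    qed
    then show "k' \<in> p -` linf_ball (p k) r" by (simp add: linf_ball_def)
  qed
  have Jb: "measure_pmf.expectation \<nu>n (\<lambda>x. (measure_pmf.prob \<nu>n (linf_ball x r)) powr (q-1))
           \<le> 1 + 2 powr (-q) * real (C_n n K) powr (1-q)"
  proof -
    have "measure_pmf.expectation \<nu>n (\<lambda>x. (measure_pmf.prob \<nu>n (linf_ball x r)) powr (q-1))
        = measure_pmf.expectation \<rho> (\<lambda>k. (measure_pmf.prob \<nu>n (linf_ball (p k) r)) powr (q-1))"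
      unfolding \<nu>n_def by (rule integral_map_pmf)
    also have "\<dots> = (\<Sum>k\<in>I. (measure_pmf.prob \<nu>n (linf_ball (p k) r)) powr (q-1) * pmf \<rho> k)"
      using finI \<rho>(1) by (intro integral_measure_pmf_real) auto
    also have "\<dots> \<le> (\<Sum>k\<in>I. pmf \<rho> k * (measure_pmf.prob \<rho> {k'\<in>I. adj k k'}) powr (q-1))"
    proof (rule sum_mono)
      fix k assume kI: "k \<in> I"
      have pos: "0 < measure_pmf.prob \<rho> {k'\<in>I. adj k k'}"
        using kI \<rho>(1) arefl by (intro measure_pmf_posI) auto
      have "measure_pmf.prob \<rho> {k'\<in>I. adj k k'} \<le> measure_pmf.prob \<rho> (p -` linf_ball (p k) r)"
        using ballN[OF kI] by (intro measure_pmf.finite_measure_mono) auto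
      also have "\<dots> = measure_pmf.prob \<nu>n (linf_ball (p k) r)" unfolding \<nu>n_def by simp
      finally have "(measure_pmf.prob \<nu>n (linf_ball (p k) r)) powr (q-1) \<le> (measure_pmf.prob \<rho> {k'\<in>I. adj k k'}) powr (q-1)"
        using pos assms(4) by (intro powr_mono2') auto
      then show "(measure_pmf.prob \<nu>n (linf_ball (p k) r)) powr (q-1) * pmf \<rho> k
          \<le> pmf \<rho> k * (measure_pmf.prob \<rho> {k'\<in>I. adj k k'}) powr (q-1)"
        by (simp add: mult.commute mult_left_mono)
    qed
    also have "\<dots> \<le> 1 + 2 powr (-q) * real (card R) powr (1-q)" by (rule \<rho>(2))
    also have "\<dots> \<le> 1 + 2 powr (-q) * real (C_n n K) powr (1-q)"
      using R(3) assms(4) by (auto intro!: mult_left_mono powr_mono2)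
    finally show ?thesis .
  qed
  show ?thesis
  proof (intro exI[of _ \<nu>n] conjI allI impI fin\<nu> sub\<nu>)
    fix \<mu> :: "(real^'d) pmf" and \<theta> :: real
    assume as: "finite (set_pmf \<mu>) \<and> set_pmf \<mu> \<subseteq> K \<and> 0 < \<theta> \<and> \<theta> < 1"
    define \<nu> where "\<nu> = mixture \<theta> \<mu> \<nu>n"
    have th: "0 < \<theta>" "\<theta> < 1" using as by auto
    have m: "measure_pmf.expectation \<nu> (\<lambda>x. (measure_pmf.prob \<nu> (linf_ball x r)) powr (q-1))
       \<le> real (card (set_pmf \<mu>)) * (1-\<theta>) powr q * (Min (pmf \<mu> ` set_pmf \<mu>)) powr q
          + \<theta> powr q * (1 + 2 powr (-q) * real (C_n n K) powr (1-q))"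
      unfolding \<nu>_def using as fin\<nu> assms(4) Jb r0
      by (intro mixture_bound) (auto simp: linf_ball_def)
    have eq: "\<theta> powr q * (1 + 2 powr (-q) * X) = \<theta> powr q + \<theta> powr q / 2 powr q * X" for X
      by (simp add: powr_minus_divide algebra_simps)
    have pos: "0 < measure_pmf.prob \<nu> (linf_ball x r)" if xK: "x \<in> K" for x
    proof -
      define k0 where "k0 = idx n x"
      have k0I: "k0 \<in> I" unfolding I_def k0_def using in_own_cube[of x n] xK by blast
      have "\<bar>p k0 $ j - x $ j\<bar> \<le> r" for j
      proof -
        have "\<bar>p k0 $ j - x $ j\<bar> < 1 / 2 ^ n"
          using p[OF k0I] in_own_cube[of x n] unfolding k0_def by (intro same_cube_dist) auto
        also have "\<dots> \<le> r" unfolding r_eq by (simp add: divide_right_mono)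
        finally show ?thesis by simp
      qed
      then have inb: "p k0 \<in> linf_ball x r" by (simp add: linf_ball_def)
      have "p k0 \<in> set_pmf \<nu>n" unfolding set\<nu> using k0I by blast
      then have P0: "0 < measure_pmf.prob \<nu>n (linf_ball x r)" using inb by (intro measure_pmf_posI)
      have P1: "0 < \<theta> * measure_pmf.prob \<nu>n (linf_ball x r)" using th(1) P0 by (rule mult_pos_pos)
      have "measure_pmf.prob \<nu> (linf_ball x r) = (1 - \<theta>) * measure_pmf.prob \<mu> (linf_ball x r) + \<theta> * measure_pmf.prob \<nu>n (linf_ball x r)"
        unfolding \<nu>_def using th as fin\<nu> by (intro prob_mixture) auto
      moreover have "0 \<le> (1 - \<theta>) * measure_pmf.prob \<mu> (linf_ball x r)" using th by simp
      ultimately show ?thesis using P1 by linarith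
    qed
    show "let \<nu> = mixture \<theta> \<mu> \<nu>n; N = card (set_pmf \<mu>); a = Min (pmf \<mu> ` set_pmf \<mu>) in
          I_nu \<nu> (3 * 2 powr (- real n)) q
            \<le> real N * (1 - \<theta>) powr q * a powr q + \<theta> powr q
               + \<theta> powr q / 2 powr q * real (C_n n K) powr (1 - q)
          \<and> (\<forall>x\<in>K. measure_pmf.prob \<nu> (linf_ball x (3 * 2 powr (- real n))) > 0)"
      unfolding Let_def r_def[symmetric] \<nu>_def[symmetric] I_nu_def
    proof (intro conjI ballI)
      show "measure_pmf.expectation \<nu> (\<lambda>x. (measure_pmf.prob \<nu> (linf_ball x r)) powr (q-1))
          \<le> real (card (set_pmf \<mu>)) * (1 - \<theta>) powr q * (Min (pmf \<mu> ` set_pmf \<mu>)) powr q + \<theta> powr q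
               + \<theta> powr q / 2 powr q * real (C_n n K) powr (1 - q)"
        using m eq[of "real (C_n n K) powr (1 - q)"] by linarith
    next
      fix x assume "x \<in> K"
      then show "0 < measure_pmf.prob \<nu> (linf_ball x r)" by (rule pos)
    qed
  qed
qed

end
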